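(* $\mathrm{cov}(\mathcal{M})\leq\mathrm{cov}^{+}(\mathcal{S}pl)\leq\mathfrak{r}$.
   Context: For an infinite $A\subseteq\omega$, let $S(A)$ be the set of all $\sigma\in2^{<\omega}$ such that $\sigma$ is constant on $A\cap\mathrm{dom}(\sigma)$. The splitting ideal $\mathcal{S}pl$ is the ideal on $2^{<\omega}$ generated by the sets $S(A)$, $A\in[\omega]^{\omega}$. For an ideal $\mathcal{J}$, $\mathrm{cov}^{+}(\mathcal{J})=\min\{|\mathcal{F}|:\mathcal{F}\subseteq\mathcal{J}$ and for every $\mathcal{J}$-positive $X$ there is $F\in\mathcal{F}$ with $|X\cap F|=\omega\}$. $\mathcal{M}$ is the ideal of meager subsets of $2^\omega$, and $\mathfrak{r}$ is the reaping number. *)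

theory Defs
  imports Main
begin

text \<open>Cantor space 2^omega is nat => bool; 2^{<omega} is bool list.
  dom(sigma) = {0..<length sigma}.\<close>

definition basic_open :: "bool list \<Rightarrow> (nat \<Rightarrow> bool) set" where
  "basic_open \<sigma> = {x. \<forall>i<length \<sigma>. x i = \<sigma> ! i}"

definition nowhere_dense_cantor :: "(nat \<Rightarrow> bool) set \<Rightarrow> bool" where
  "nowhere_dense_cantor A \<longleftrightarrow>
     (\<forall>\<sigma>. \<exists>\<rho>. basic_open (\<sigma> @ \<rho>) \<inter> A = {})"

definition meager_cantor :: "(nat \<Rightarrow> bool) set \<Rightarrow> bool" where
  "meager_cantor A \<longleftrightarrow>
     (\<exists>N :: nat \<Rightarrow> (nat \<Rightarrow> bool) set. (\<forall>n. nowhere_dense_cantor (N n)) \<and> A \<subseteq> (\<Union>n. N n))"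

definition cov_M_family :: "(nat \<Rightarrow> bool) set set \<Rightarrow> bool" where
  "cov_M_family \<G> \<longleftrightarrow> (\<forall>G\<in>\<G>. meager_cantor G) \<and> \<Union>\<G> = UNIV"

definition S_set :: "nat set \<Rightarrow> bool list set" where
  "S_set A = {\<sigma>. \<forall>i\<in>A. \<forall>j\<in>A. i < length \<sigma> \<longrightarrow> j < length \<sigma> \<longrightarrow> \<sigma> ! i = \<sigma> ! j}"

definition Spl :: "bool list set set" where
  "Spl = {X. \<exists>\<A>. finite \<A> \<and> (\<forall>A\<in>\<A>. infinite A) \<and> X \<subseteq> (\<Union>A\<in>\<A>. S_set A)}"

definition cov_plus_family :: "'a set set \<Rightarrow> 'a set set \<Rightarrow> bool" where
  "cov_plus_family J \<F> \<longleftrightarrow> \<F> \<subseteq> J \<and>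
     (\<forall>X. X \<notin> J \<longrightarrow> (\<exists>F\<in>\<F>. infinite (X \<inter> F)))"

definition splits :: "nat set \<Rightarrow> nat set \<Rightarrow> bool" where
  "splits A R \<longleftrightarrow> infinite (R \<inter> A) \<and> infinite (R - A)"

definition reaping_family :: "nat set set \<Rightarrow> bool" where
  "reaping_family \<R> \<longleftrightarrow> (\<forall>R\<in>\<R>. infinite R) \<and> (\<forall>A. \<exists>R\<in>\<R>. \<not> splits A R)"

end

theory Submission
  imports Defs "HOL-Library.Infinite_Set" "HOL-Library.Countable"
begin


lemma inf_ex: "infinite (S::nat set) \<Longrightarrow> \<exists>x. x \<in> S \<and> m \<le> x"
  unfolding infinite_nat_iff_unbounded_le by blast

lemma S_setD: "s \<in> S_set A \<Longrightarrow> i \<in> A \<Longrightarrow> j \<in> A \<Longrightarrow> i < length s \<Longrightarrow> j < length s \<Longrightarrow> s ! i = s ! j"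
  unfolding S_set_def by blast
lemma S_set_take:
  assumes "s \<in> S_set A" shows "take m s \<in> S_set A"
  unfolding S_set_def
proof (intro CollectI ballI impI)
  fix i j assume ij: "i \<in> A" "j \<in> A" "i < length (take m s)" "j < length (take m s)"
  have "s ! i = s ! j" by (rule S_setD[OF assms ij(1,2)]) (use ij in auto)
  then show "take m s ! i = take m s ! j" using ij(3,4) by simp
qed
lemma S_setI: "(\<And>i. i \<in> A \<Longrightarrow> i < length s \<Longrightarrow> s ! i = b) \<Longrightarrow> s \<in> S_set A"
  unfolding S_set_def by (intro CollectI ballI impI) (metis)
lemma S_set_notI: "p \<in> A \<Longrightarrow> q \<in> A \<Longrightarrow> p < length s \<Longrightarrow> q < length s \<Longrightarrow> s ! p \<noteq> s ! q \<Longrightarrow> s \<notin> S_set A"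
  unfolding S_set_def by blast
lemma S_set_prefix: "s @ r \<in> S_set A \<Longrightarrow> s \<in> S_set A"
  using S_set_take[of "s @ r" A "length s"] by simp
lemma block_unique:
  fixes a :: "nat \<Rightarrow> nat"
  assumes "strict_mono a" "a k \<le> j" "j < a (Suc k)" "a k' \<le> j" "j < a (Suc k')"
  shows "k = k'"
proof (rule ccontr)
  assume "k \<noteq> k'"
  then consider "Suc k \<le> k'" | "Suc k' \<le> k" by linarith
  then show False
  proof cases
    case 1 then have "a (Suc k) \<le> a k'" using assms(1) strict_mono_less_eq by blast
    then show False using assms by linarith
  next
    case 2 then have "a (Suc k') \<le> a k" using assms(1) strict_mono_less_eq by blast
    then show False using assms by linarith
  qed
qed

lemma finite_not_reaping:
  fixes RR :: "nat set set"
  assumes fin: "finite RR" and inf: "\<forall>R\<in>RR. infinite R"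
  shows "\<exists>A. \<forall>R\<in>RR. splits A R"
proof -
  define nx where "nx R m = (LEAST x. x \<in> R \<and> m \<le> x)" for R :: "nat set" and m
  have nx: "nx R m \<in> R \<and> m \<le> nx R m" if "R \<in> RR" for R m
  proof -
    have "infinite R" using inf that by blast
    then have "\<exists>x. x \<in> R \<and> m \<le> x" by (rule inf_ex)
    then show ?thesis unfolding nx_def by (rule LeastI_ex)
  qed
  define c where "c = rec_nat 0 (\<lambda>_ m. Suc (Max ((\<lambda>R. nx R m) ` RR)))"
  have c0: "c 0 = 0" unfolding c_def by simp
  have cS: "c (Suc j) = Suc (Max ((\<lambda>R. nx R (c j)) ` RR))" for j unfolding c_def by simp
  have nxc: "c j \<le> nx R (c j) \<and> nx R (c j) < c (Suc j) \<and> nx R (c j) \<in> R" if "R \<in> RR" for R j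
  proof -
    have "nx R (c j) \<le> Max ((\<lambda>R. nx R (c j)) ` RR)" using fin that by simp
    then show ?thesis using nx[OF that] cS by (simp add: le_imp_less_Suc)
  qed
  show ?thesis
  proof (cases "RR = {}")
    case True then show ?thesis by simp
  next
    case False
    then obtain R0 where R0: "R0 \<in> RR" by blast
    have sm: "strict_mono c" unfolding strict_mono_Suc_iff
    proof
      fix j show "c j < c (Suc j)" using nxc[OF R0, of j] by linarith
    qed
    define A where "A = {x. \<exists>j. even j \<and> c j \<le> x \<and> x < c (Suc j)}"
    have "splits A R" if R: "R \<in> RR" for R
    proof -
      have "infinite (R \<inter> A)" unfolding infinite_nat_iff_unbounded_le
      proof
        fix m
        have "m \<le> c (2*m)" using sm strict_mono_imp_increasing[of c "2*m"] by linarith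
        moreover have "nx R (c (2*m)) \<in> A" unfolding A_def
          using nxc[OF R, of "2*m"] by (intro CollectI exI[of _ "2*m"]) simp
        ultimately show "\<exists>n\<ge>m. n \<in> R \<inter> A" using nxc[OF R, of "2*m"]
          by (intro exI[of _ "nx R (c (2*m))"]) simp
      qed
      moreover have "infinite (R - A)" unfolding infinite_nat_iff_unbounded_le
      proof
        fix m
        have "m \<le> c (2*m+1)" using sm strict_mono_imp_increasing[of c "2*m+1"] by linarith
        moreover have "nx R (c (2*m+1)) \<notin> A"
        proof
          assume "nx R (c (2*m+1)) \<in> A"
          then obtain j where "even j" "c j \<le> nx R (c (2*m+1))" "nx R (c (2*m+1)) < c (Suc j)"
            unfolding A_def by blast
          note j = this
          have h1: "c (2*m+1) \<le> nx R (c (2*m+1))" "nx R (c (2*m+1)) < c (Suc (2*m+1))"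
            using nxc[OF R] by auto
          have "j = 2*m+1" using block_unique[OF sm j(2,3) h1] .
          then show False using j(1) by simp
        qed
        ultimately show "\<exists>n\<ge>m. n \<in> R - A" using nxc[OF R, of "2*m+1"]
          by (intro exI[of _ "nx R (c (2*m+1))"]) simp
      qed
      ultimately show ?thesis unfolding splits_def by (simp add: Int_commute)
    qed
    then show ?thesis by blast
  qed
qed

lemma reaping_infinite:
  assumes "reaping_family RR" shows "infinite RR"
proof
  assume "finite RR"
  moreover have "\<forall>R\<in>RR. infinite R" using assms unfolding reaping_family_def by blast
  ultimately obtain A where A: "\<forall>R\<in>RR. splits A R" using finite_not_reaping by blast
  obtain R where "R \<in> RR" "\<not> splits A R" using assms unfolding reaping_family_def by blast
  with A show False by blast
qed

lemma finite_in_Spl: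
  assumes "finite X" shows "X \<in> Spl"
proof -
  define M where "M = Suc (Max (insert 0 (length ` X)))"
  have lenM: "length s < M" if "s \<in> X" for s
    using assms that unfolding M_def by (simp add: le_imp_less_Suc)
  have "X \<subseteq> S_set {M..}"
  proof
    fix s assume "s \<in> X"
    then have "length s < M" by (rule lenM)
    then show "s \<in> S_set {M..}" by (intro S_setI[where b=True]) auto
  qed
  moreover have "infinite {M..}" unfolding infinite_nat_iff_unbounded_le
    by (metis atLeast_iff max.cobounded1 max.cobounded2)
  ultimately show ?thesis unfolding Spl_def
    by (intro CollectI exI[of _ "{{M..}}"]) auto
qed

lemma S_set_Spl:
  assumes "infinite D" shows "S_set D \<in> Spl"
  unfolding Spl_def using assms by (intro CollectI exI[of _ "{D}"]) auto

lemma hit: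
  fixes X :: "bool list set"
  assumes infX: "infinite X" and RR: "reaping_family RR"
  shows "\<exists>R1\<in>RR. \<exists>R2\<in>RR. \<exists>n. infinite (X \<inter> S_set (Infinite_Set.enumerate R1 ` R2 - {..<n}))"
proof -
  define ext where "ext t = {\<sigma>\<in>X. take (length t) \<sigma> = t}" for t :: "bool list"
  have ext_split: "ext t \<subseteq> {t} \<union> ext (t @ [True]) \<union> ext (t @ [False])" for t
  proof
    fix \<sigma> assume s: "\<sigma> \<in> ext t"
    show "\<sigma> \<in> {t} \<union> ext (t @ [True]) \<union> ext (t @ [False])"
    proof (cases "\<sigma> = t")
      case False
      from s have tk: "take (length t) \<sigma> = t" "\<sigma> \<in> X" unfolding ext_def by auto
      have "min (length t) (length \<sigma>) = length t" using arg_cong[OF tk(1), of length] by simp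
      then have "length t \<le> length \<sigma>" by simp
      with False tk have lt: "length t < length \<sigma>" by (metis le_neq_implies_less take_all)
      then have "take (length (t @ [\<sigma> ! length t])) \<sigma> = t @ [\<sigma> ! length t]"
        using tk by (simp add: take_Suc_conv_app_nth)
      then show ?thesis using tk unfolding ext_def by (cases "\<sigma> ! length t") auto
    qed simp
  qed
  define pre where "pre = rec_nat [] (\<lambda>_ p. p @ [infinite (ext (p @ [True]))])"
  have pre0: "pre 0 = []" and preS: "pre (Suc k) = pre k @ [infinite (ext (pre k @ [True]))]" for k
    unfolding pre_def by simp_all
  have inf_pre: "infinite (ext (pre k))" for k
  proof (induction k)
    case 0
    have "ext [] = X" unfolding ext_def by simp
    then show ?case using infX pre0 by simp
  next
    case (Suc k)
    show ?case
    proof (cases "infinite (ext (pre k @ [True]))")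
      case True then show ?thesis using preS by simp
    next
      case False
      have "infinite (ext (pre k @ [False]))"
      proof
        assume "finite (ext (pre k @ [False]))"
        then have "finite ({pre k} \<union> ext (pre k @ [True]) \<union> ext (pre k @ [False]))" using False by simp
        then show False using Suc.IH ext_split[of "pre k"] finite_subset by blast
      qed
      then show ?thesis using preS False by simp
    qed
  qed
  have len_pre: "length (pre k) = k" for k by (induction k) (simp_all add: pre0 preS)
  have take_pre: "take k (pre (k + d)) = pre k" for k d
    by (induction d) (simp_all add: pre0 preS len_pre)
  define z where "z k = pre (Suc k) ! k" for k
  have pre_nth: "pre k ! j = z j" if "j < k" for j k
  proof -
    have "pre k ! j = take (Suc j) (pre (Suc j + (k - Suc j))) ! j"
      using that by simp
    then show ?thesis unfolding z_def take_pre by simp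
  qed
  have ext_nth: "\<sigma> ! j = z j" if "\<sigma> \<in> ext (pre m)" "j < m" for \<sigma> j m
  proof -
    have "take m \<sigma> = pre m" using that len_pre unfolding ext_def by simp
    then have "\<sigma> ! j = pre m ! j" using that(2) by (metis nth_take)
    then show ?thesis using pre_nth that(2) by simp
  qed
  have ne: "\<exists>\<sigma>. \<sigma> \<in> ext (pre k)" for k using inf_pre[of k] by (metis ex_in_conv finite.emptyI)
  define sq where "sq = rec_nat (SOME \<sigma>. \<sigma> \<in> ext (pre 0)) (\<lambda>_ s. SOME \<sigma>. \<sigma> \<in> ext (pre (Suc (length s))))"
  define a where "a k = (case k of 0 \<Rightarrow> 0 | Suc j \<Rightarrow> Suc (length (sq j)))" for k
  have sq_in: "sq k \<in> ext (pre (a k))" for k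
  proof (cases k)
    case 0 then show ?thesis unfolding sq_def a_def using someI_ex[OF ne[of 0]] by simp
  next
    case (Suc j) then show ?thesis unfolding sq_def a_def using someI_ex[OF ne] by simp
  qed
  have sqX: "sq k \<in> X" for k using sq_in unfolding ext_def by simp
  have a_le: "a k \<le> length (sq k)" for k
  proof -
    have "take (a k) (sq k) = pre (a k)" using sq_in[of k] len_pre[of "a k"] unfolding ext_def by simp
    then have "length (take (a k) (sq k)) = a k" using len_pre[of "a k"] by simp
    then have "min (a k) (length (sq k)) = a k" by simp
    then show ?thesis by simp
  qed
  have len_lt: "length (sq k) < a (Suc k)" for k unfolding a_def by simp
  have sm: "strict_mono a" unfolding strict_mono_Suc_iff using a_le len_lt le_less_trans by blast
  have agree: "sq k ! j = z j" if "j < a k" for k j using ext_nth[OF sq_in that] .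
  have sm_len: "strict_mono (\<lambda>k. length (sq k))" unfolding strict_mono_Suc_iff
    using a_le len_lt by (meson less_le_trans)
  have "inj (length \<circ> sq)" using strict_mono_imp_inj_on[OF sm_len] by (simp add: comp_def)
  then have inj_sq: "inj sq" by (rule inj_on_imageI2)
  from RR obtain R1 where R1: "R1 \<in> RR" "\<not> splits {j. z j} R1" unfolding reaping_family_def by blast
  have infR1: "infinite R1" using R1 RR unfolding reaping_family_def by blast
  define b where "b = finite (R1 - {j. z j})"
  define W where "W = {j. z j = b}"
  have finW: "finite (R1 - W)"
  proof (cases b)
    case True then show ?thesis unfolding W_def b_def by (simp add: b_def)
  next
    case False
    then have "finite (R1 \<inter> {j. z j})" using R1(2) unfolding splits_def b_def by blast
    moreover have "R1 - W = R1 \<inter> {j. z j}" unfolding W_def using False by auto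
    ultimately show ?thesis by simp
  qed
  define e where "e = Infinite_Set.enumerate R1"
  define E where "E = {j. \<exists>k. even k \<and> a k \<le> j \<and> j < a (Suc k)}"
  from RR obtain R2 where R2: "R2 \<in> RR" "\<not> splits (e -` E) R2" unfolding reaping_family_def by blast
  define fl where "fl = finite (R2 \<inter> e -` E)"
  define B2 where "B2 = (if fl then R2 \<inter> e -` E else R2 - e -` E)"
  have finB2: "finite B2" using R2(2) unfolding B2_def fl_def splits_def by auto
  obtain N1 where N1: "R1 - W \<subseteq> {..<N1}" using finite_nat_bounded[OF finW] by blast
  obtain N2 where N2: "B2 \<subseteq> {..<N2}" using finite_nat_bounded[OF finB2] by blast
  define n where "n = max N1 (e N2)"
  define D where "D = e ` R2 - {..<n}"
  have DW: "z d = b" if "d \<in> D" for d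
  proof -
    have "d \<in> e ` R2" "\<not> d < n" using that unfolding D_def by auto
    then obtain m where m: "m \<in> R2" "d = e m" "d \<ge> n" by auto
    have "d \<in> R1" using m(2) enumerate_in_set[OF infR1] unfolding e_def by simp
    moreover have "d \<ge> N1" using m(3) unfolding n_def by simp
    ultimately have "d \<in> W" using N1 by auto
    then show ?thesis unfolding W_def by simp
  qed
  have DE: "(fl \<longrightarrow> d \<notin> E) \<and> (\<not> fl \<longrightarrow> d \<in> E)" if "d \<in> D" for d
  proof -
    have "d \<in> e ` R2" "\<not> d < n" using that unfolding D_def by auto
    then obtain m where m: "m \<in> R2" "d = e m" "d \<ge> n" by auto
    have "e N2 \<le> e m" using m unfolding n_def by simp
    then have "N2 \<le> m" using infR1 unfolding e_def by simp
    then have "m \<notin> B2" using N2 by auto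
    then show ?thesis using m unfolding B2_def by auto
  qed
  define K where "K = {k::nat. (fl \<longrightarrow> even k) \<and> (\<not> fl \<longrightarrow> odd k)}"
  have infK: "infinite K"
  proof (cases fl)
    case True
    have "infinite {k::nat. even k}" unfolding infinite_nat_iff_unbounded_le
    proof
      fix m :: nat show "\<exists>n\<ge>m. n \<in> {k. even k}" by (rule exI[of _ "2*m"]) auto
    qed
    then show ?thesis using True unfolding K_def by simp
  next
    case False
    have "infinite {k::nat. odd k}" unfolding infinite_nat_iff_unbounded_le
    proof
      fix m :: nat show "\<exists>n\<ge>m. n \<in> {k. odd k}" by (rule exI[of _ "2*m+1"]) auto
    qed
    then show ?thesis using False unfolding K_def by simp
  qed
  have sqS: "sq k \<in> S_set D" if "k \<in> K" for k
  proof -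
    have hb: "sq k ! i = b" if i: "i \<in> D" "i < length (sq k)" for i
    proof (cases "i < a k")
      case True then show ?thesis using agree DW i by simp
    next
      case False
      then have blk: "a k \<le> i" "i < a (Suc k)" using i len_lt[of k] by auto
      show ?thesis
      proof (cases fl)
        case True
        then have "i \<notin> E" using DE i by blast
        moreover have "even k" using True \<open>k \<in> K\<close> unfolding K_def by simp
        ultimately show ?thesis using blk unfolding E_def by blast
      next
        case False
        then have "i \<in> E" using DE i by blast
        then obtain k' where "even k'" "a k' \<le> i" "i < a (Suc k')" unfolding E_def by blast
        then have "k' = k" using block_unique[OF sm _ _ blk] by blast
        moreover have "odd k" using False \<open>k \<in> K\<close> unfolding K_def by simp
        ultimately show ?thesis using \<open>even k'\<close> by simp
      qed
    qed
    show ?thesis using S_setI[of D "sq k" b] hb by blast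
  qed
  have "sq ` K \<subseteq> X \<inter> S_set D" using sqX sqS by auto
  moreover have "infinite (sq ` K)" using infK inj_on_subset[OF inj_sq subset_UNIV] finite_imageD by blast
  ultimately have "infinite (X \<inter> S_set D)" using finite_subset by blast
  then show ?thesis using R1(1) R2(1) unfolding D_def e_def by blast
qed

lemma part2:
  assumes RR: "reaping_family RR"
  shows "\<exists>F. cov_plus_family Spl F \<and> (card_of F, card_of RR) \<in> ordLeq"
proof -
  have infRR: "infinite RR" using reaping_infinite[OF RR] .
  define F where "F = (\<lambda>(R, R', n). S_set (Infinite_Set.enumerate R ` R' - {..<n})) ` (RR \<times> RR \<times> (UNIV :: nat set))"
  have sub: "F \<subseteq> Spl"
  proof
    fix Y assume "Y \<in> F"
    then obtain x where x: "x \<in> RR \<times> RR \<times> (UNIV :: nat set)"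
      "Y = (\<lambda>(R, R', n). S_set (Infinite_Set.enumerate R ` R' - {..<n})) x"
      unfolding F_def by (rule imageE)
    obtain R R' n where xe: "x = (R, R', n)" by (cases x) blast
    have Rs: "R \<in> RR" "R' \<in> RR" "Y = S_set (Infinite_Set.enumerate R ` R' - {..<n})"
      using x xe by auto
    have iR: "infinite R" "infinite R'" using Rs RR unfolding reaping_family_def by auto
    have "strict_mono (Infinite_Set.enumerate R)" using iR(1) by (simp add: strict_mono_def)
    then have "inj (Infinite_Set.enumerate R)" by (rule strict_mono_imp_inj_on)
    then have "infinite (Infinite_Set.enumerate R ` R')" using iR(2) inj_on_subset[of _ UNIV R'] finite_imageD by blast
    then have "infinite (Infinite_Set.enumerate R ` R' - {..<n})" by simp
    then show "Y \<in> Spl" using Rs S_set_Spl by simp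
  qed
  have cov: "\<exists>G\<in>F. infinite (X \<inter> G)" if "X \<notin> Spl" for X
  proof -
    have "infinite X" using that finite_in_Spl by blast
    then obtain R1 R2 n where "R1 \<in> RR" "R2 \<in> RR" "infinite (X \<inter> S_set (Infinite_Set.enumerate R1 ` R2 - {..<n}))"
      using hit RR by blast
    moreover have "S_set (Infinite_Set.enumerate R1 ` R2 - {..<n}) \<in> F"
    proof -
      have "(R1, R2, n) \<in> RR \<times> RR \<times> (UNIV :: nat set)" using \<open>R1 \<in> RR\<close> \<open>R2 \<in> RR\<close> by simp
      then show ?thesis unfolding F_def by (rule rev_image_eqI) simp
    qed
    ultimately show ?thesis by blast
  qed
  have c1: "(card_of F, card_of (RR \<times> RR \<times> (UNIV :: nat set))) \<in> ordLeq" unfolding F_def by (rule card_of_image)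
  have nat_le: "(card_of (UNIV :: nat set), card_of RR) \<in> ordLeq" using infRR infinite_iff_card_of_nat by blast
  have c2: "(card_of (RR \<times> (UNIV :: nat set)), card_of RR) \<in> ordIso"
    using card_of_Times_infinite_simps(1)[OF infRR _ nat_le] by simp
  then have c2': "(card_of (RR \<times> (UNIV :: nat set)), card_of RR) \<in> ordLeq" using ordIso_iff_ordLeq by blast
  have "RR \<times> (UNIV :: nat set) \<noteq> {}" using infRR by auto
  then have c3: "(card_of (RR \<times> RR \<times> (UNIV :: nat set)), card_of RR) \<in> ordIso"
    using card_of_Times_infinite_simps(1)[OF infRR _ c2'] by simp
  have "(card_of F, card_of RR) \<in> ordLeq" using ordLeq_ordIso_trans[OF c1 c3] .
  then show ?thesis using sub cov unfolding cov_plus_family_def by blast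
qed



definition pos :: "bool list \<Rightarrow> nat \<Rightarrow> nat" where
  "pos t k = prod_encode (to_nat t, k)"

definition Nv :: "(nat \<Rightarrow> bool) \<Rightarrow> bool list \<Rightarrow> nat" where
  "Nv c t = (LEAST k. \<not> c (pos t k))"

definition blk :: "(nat \<Rightarrow> bool) \<Rightarrow> bool list \<Rightarrow> bool list" where
  "blk c t = False # (from_nat (Nv c t) :: bool list)"

fun xr :: "(nat \<Rightarrow> bool) \<Rightarrow> bool list \<Rightarrow> bool list" where
  "xr c [] = []"
| "xr c (i # r) = xr c r @ map (\<lambda>v. v \<noteq> i) (blk c (rev r))"

definition xx :: "(nat \<Rightarrow> bool) \<Rightarrow> bool list \<Rightarrow> bool list" where
  "xx c s = xr c (rev s)"

lemma xx_Nil [simp]: "xx c [] = []" unfolding xx_def by simp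

lemma xx_snoc [simp]: "xx c (s @ [i]) = xx c s @ map (\<lambda>v. v \<noteq> i) (blk c s)"
  unfolding xx_def by simp

lemma xx_append: "\<exists>r. xx c (s @ u) = xx c s @ r"
proof (induction u rule: rev_induct)
  case Nil then show ?case by simp
next
  case (snoc x xs)
  then obtain r where "xx c (s @ xs) = xx c s @ r" by blast
  then show ?case by (metis append.assoc xx_snoc)
qed

lemma len_blk: "length (blk c t) > 0" unfolding blk_def by simp

lemma notS_ext: "xx c t \<notin> S_set A \<Longrightarrow> xx c (t @ u) \<notin> S_set A"
  using xx_append S_set_prefix by metis

lemma pos_lemma:
  "length (xx c t0) \<le> p \<Longrightarrow> \<exists>u. p < length (xx c (t0 @ u)) \<and> xx c (t0 @ u) ! p = bv"
proof (induction "p - length (xx c t0)" arbitrary: t0 rule: less_induct)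
  case less
  let ?L0 = "length (xx c t0)"
  let ?b = "blk c t0"
  show ?case
  proof (cases "p < ?L0 + length ?b")
    case True
    define i where "i = (?b ! (p - ?L0) \<noteq> bv)"
    have "xx c (t0 @ [i]) ! p = (?b ! (p - ?L0) \<noteq> i)" using True less.prems
      by (simp add: nth_append)
    then have "xx c (t0 @ [i]) ! p = bv" unfolding i_def by (cases bv) auto
    moreover have "p < length (xx c (t0 @ [i]))" using True by simp
    ultimately show ?thesis by (metis append.assoc)
  next
    case False
    have "length (xx c (t0 @ [False])) \<le> p" using False by simp
    moreover have "p - length (xx c (t0 @ [False])) < p - ?L0"
    proof -
      have lb: "length (xx c (t0 @ [False])) = ?L0 + length ?b" by simp
      show ?thesis unfolding lb using False len_blk[of c t0] by linarith
    qed
    ultimately obtain u where "p < length (xx c ((t0 @ [False]) @ u)) \<and> xx c ((t0 @ [False]) @ u) ! p = bv"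
      using less.hyps by blast
    then show ?thesis by (metis append.assoc)
  qed
qed

lemma one_set:
  assumes "infinite A"
  shows "\<exists>u. xx c (t0 @ u) \<notin> S_set A"
proof -
  obtain p where p: "p \<in> A" "length (xx c t0) \<le> p" using inf_ex[OF assms] by blast
  obtain u1 where u1: "p < length (xx c (t0 @ u1))" "xx c (t0 @ u1) ! p = False"
    using pos_lemma[OF p(2)] by blast
  obtain q where q: "q \<in> A" "length (xx c (t0 @ u1)) \<le> q" using inf_ex[OF assms] by blast
  obtain u2 where u2: "q < length (xx c ((t0 @ u1) @ u2))" "xx c ((t0 @ u1) @ u2) ! q = True"
    using pos_lemma[OF q(2)] by blast
  obtain r where r: "xx c ((t0 @ u1) @ u2) = xx c (t0 @ u1) @ r" using xx_append by blast
  have "xx c ((t0 @ u1) @ u2) ! p = False" using r u1 by (simp add: nth_append)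
  moreover have "p < length (xx c ((t0 @ u1) @ u2))" using r u1 by simp
  ultimately have "xx c ((t0 @ u1) @ u2) \<notin> S_set A" using u2 p q
    by (intro S_set_notI[of p A q]) auto
  then show ?thesis by (metis append.assoc)
qed

lemma finite_family:
  assumes "finite AA" "\<forall>A\<in>AA. infinite A"
  shows "\<exists>t. \<forall>A\<in>AA. xx c t \<notin> S_set A"
  using assms
proof (induction AA rule: finite_induct)
  case empty then show ?case by simp
next
  case (insert A F)
  then obtain t where t: "\<forall>B\<in>F. xx c t \<notin> S_set B" by blast
  obtain u where u: "xx c (t @ u) \<notin> S_set A" using one_set insert.prems by blast
  have "\<forall>B\<in>F. xx c (t @ u) \<notin> S_set B" using t notS_ext by blast
  with u show ?case by blast
qed

definition XX :: "(nat \<Rightarrow> bool) \<Rightarrow> bool list set" where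
  "XX c = range (xx c)"

lemma XX_pos: "XX c \<notin> Spl"
proof
  assume "XX c \<in> Spl"
  then obtain AA where AA: "finite AA" "\<forall>A\<in>AA. infinite A" "XX c \<subseteq> (\<Union>A\<in>AA. S_set A)"
    unfolding Spl_def by blast
  obtain t where "\<forall>A\<in>AA. xx c t \<notin> S_set A" using finite_family[OF AA(1,2)] by blast
  moreover have "xx c t \<in> XX c" unfolding XX_def by simp
  ultimately show False using AA(3) by blast
qed

lemma triangle_mono: "m \<le> n \<Longrightarrow> triangle m \<le> triangle n"
  by (induction n) (auto simp: le_Suc_eq)

lemma pos_mono: "k \<le> k' \<Longrightarrow> pos t k \<le> pos t k'"
  unfolding pos_def prod_encode_def using triangle_mono[of "to_nat t + k" "to_nat t + k'"] by simp

lemma xx_cong: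
  "(\<forall>t. length t < length s \<longrightarrow> Nv c t = Nv c' t) \<Longrightarrow> xx c s = xx c' s"
proof (induction s rule: rev_induct)
  case Nil then show ?case by simp
next
  case (snoc x xs)
  then have "xx c xs = xx c' xs" by simp
  moreover have "Nv c xs = Nv c' xs" using snoc.prems by simp
  ultimately show ?case by (simp add: blk_def)
qed

definition QA :: "nat set \<Rightarrow> (nat \<Rightarrow> bool) set" where
  "QA A = {c. \<forall>n. \<exists>s. length s = n \<and> xx c s \<in> S_set A}"

lemma kill:
  assumes infA: "infinite A"
  shows "nowhere_dense_cantor (QA A)"
  unfolding nowhere_dense_cantor_def
proof (intro allI)
  fix \<sigma> :: "bool list"
  define Ls where "Ls = length \<sigma>"
  define T0 where "T0 = {t :: bool list. to_nat t < Ls}"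
  have finT0: "finite T0"
  proof -
    have "T0 = to_nat -` {..<Ls}" unfolding T0_def by auto
    then show ?thesis using finite_vimageI[OF finite_lessThan inj_to_nat] by simp
  qed
  define n where "n = Suc (Max (insert 0 (length ` T0)))"
  have big: "Ls \<le> pos t k" if "n \<le> length t" for t k
  proof -
    have "t \<notin> T0"
    proof
      assume "t \<in> T0"
      then have "length t \<le> Max (insert 0 (length ` T0))" using finT0 by simp
      then show False using that unfolding n_def by simp
    qed
    then have "Ls \<le> to_nat t" unfolding T0_def by simp
    then show ?thesis unfolding pos_def using le_prod_encode_1 le_trans by blast
  qed
  define mk where "mk Dv p = (if p < Ls then \<sigma> ! p else snd (prod_decode p) < Dv (from_nat (fst (prod_decode p)) :: bool list))"
    for Dv :: "bool list \<Rightarrow> nat" and p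
  have mk_pos: "mk Dv (pos t k) = (k < Dv t)" if "Ls \<le> pos t k" for Dv t k
    using that unfolding mk_def pos_def by simp
  have mk_ex: "\<exists>k. \<not> mk Dv (pos t k)" for Dv t
  proof -
    define k where "k = max (Dv t) Ls"
    have "Ls \<le> pos t k" unfolding pos_def k_def using le_prod_encode_2
      by (metis le_trans max.cobounded2)
    then have "\<not> mk Dv (pos t k)" using mk_pos unfolding k_def by simp
    then show ?thesis by blast
  qed
  have Nv_big: "Nv (mk Dv) t = Dv t" if "n \<le> length t" for Dv t
    unfolding Nv_def
  proof (rule Least_equality)
    show "\<not> mk Dv (pos t (Dv t))" using mk_pos big[OF that] by simp
    show "Dv t \<le> y" if "\<not> mk Dv (pos t y)" for y
      using that mk_pos big[OF \<open>n \<le> length t\<close>] by (simp add: not_less)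
  qed
  define c1 where "c1 = mk (\<lambda>_. 0)"
  define L where "L t = length (xx c1 t)" for t
  define pp where "pp t = (SOME p. p \<in> A \<and> L t \<le> p)" for t
  define qq where "qq t = (SOME q. q \<in> A \<and> Suc (pp t) \<le> q)" for t
  have ppq: "pp t \<in> A \<and> L t \<le> pp t \<and> qq t \<in> A \<and> pp t < qq t" for t
  proof -
    have "\<exists>p. p \<in> A \<and> L t \<le> p" using inf_ex[OF infA] by blast
    then have 1: "pp t \<in> A \<and> L t \<le> pp t" unfolding pp_def by (rule someI_ex)
    have "\<exists>q. q \<in> A \<and> Suc (pp t) \<le> q" using inf_ex[OF infA] by blast
    then have 2: "qq t \<in> A \<and> Suc (pp t) \<le> qq t" unfolding qq_def by (rule someI_ex)
    from 1 2 show ?thesis by simp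
  qed
  define bw where "bw t = map (\<lambda>j. j = qq t - L t) [0..<Suc (qq t - L t)]" for t
  define Dv where "Dv t = (if length t = n then to_nat (tl (bw t)) else 0)" for t
  define c0 where "c0 = mk Dv"
  have agree_low: "Nv c0 t = Nv c1 t" if "length t \<noteq> n" for t
  proof -
    have "c0 (pos t k) = c1 (pos t k)" for k
      using that unfolding c0_def c1_def mk_def Dv_def pos_def by simp
    then show ?thesis unfolding Nv_def by simp
  qed
  have xx_low: "xx c0 t = xx c1 t" if "length t \<le> n" for t
    using that agree_low by (intro xx_cong) auto
  have blk_n: "blk c0 t = bw t" if "length t = n" for t
  proof -
    have "Nv c0 t = to_nat (tl (bw t))" unfolding c0_def using Nv_big[of t Dv] that
      unfolding Dv_def by simp
    then have "blk c0 t = False # tl (bw t)" unfolding blk_def by simp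
    moreover have "bw t \<noteq> []" unfolding bw_def by simp
    moreover have "hd (bw t) = False" using ppq[of t] unfolding bw_def
      by (simp add: hd_map)
    ultimately show ?thesis by (metis list.collapse)
  qed
  have lvl: "xx c0 (t @ [i]) \<notin> S_set A" if "length t = n" for t i
  proof -
    have e: "xx c0 (t @ [i]) = xx c1 t @ map (\<lambda>v. v \<noteq> i) (bw t)"
      using blk_n[OF that] xx_low[of t] that by simp
    have lb: "length (bw t) = Suc (qq t - L t)" unfolding bw_def by simp
    have P: "pp t < length (xx c0 (t @ [i]))" "qq t < length (xx c0 (t @ [i]))"
      using e lb ppq[of t] unfolding L_def by auto
    have Lp: "L t \<le> pp t" "pp t < qq t" using ppq[of t] by auto
    have n1: "pp t - L t < length (bw t)" "qq t - L t < length (bw t)" using lb Lp by auto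
    have ne: "pp t - L t \<noteq> qq t - L t" using Lp by linarith
    have b1: "bw t ! (pp t - L t) = False"
      unfolding bw_def using n1 ne by (subst nth_map_upt) (auto simp: bw_def)
    have b2: "bw t ! (qq t - L t) = True"
      unfolding bw_def using n1 by (subst nth_map_upt) (auto simp: bw_def)
    have e': "xx c0 (t @ [i]) = xx c1 t @ map (\<lambda>v. v \<noteq> i) (bw t)" by (rule e)
    have "xx c0 (t @ [i]) ! pp t = (bw t ! (pp t - L t) \<noteq> i)"
      unfolding e' nth_append using Lp n1 by (simp add: L_def)
    moreover have "xx c0 (t @ [i]) ! qq t = (bw t ! (qq t - L t) \<noteq> i)"
      unfolding e' nth_append using Lp n1 by (simp add: L_def)
    ultimately have "xx c0 (t @ [i]) ! pp t \<noteq> xx c0 (t @ [i]) ! qq t" using b1 b2 by simp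
    then show ?thesis using P ppq[of t] by (intro S_set_notI[of "pp t" A "qq t"]) auto
  qed
  define TT where "TT = {t :: bool list. length t \<le> n}"
  have finTT: "finite TT"
    using finite_lists_length_le[of "UNIV :: bool set" n] unfolding TT_def by simp
  define M where "M = Suc (Max ((\<lambda>t. pos t (Nv c0 t)) ` TT))"
  have cont: "Nv c t = Nv c0 t" if c: "\<forall>p<M. c p = c0 p" and t: "length t \<le> n" for c t
  proof -
    define N where "N = Nv c0 t"
    have nN: "\<not> c0 (pos t N)" unfolding N_def Nv_def c0_def using mk_ex by (rule LeastI_ex)
    have lowN: "c0 (pos t k)" if "k < N" for k
      using that not_less_Least unfolding N_def Nv_def by blast
    have "pos t N < M" unfolding M_def N_def using finTT t unfolding TT_def
      by (simp add: le_imp_less_Suc)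
    then have ltM: "pos t k < M" if "k \<le> N" for k using pos_mono[OF that, of t] by simp
    have "Nv c t = N" unfolding Nv_def
    proof (rule Least_equality)
      show "\<not> c (pos t N)" using nN c ltM by simp
      show "N \<le> y" if "\<not> c (pos t y)" for y
      proof (rule ccontr)
        assume "\<not> N \<le> y"
        then have "c (pos t y) = c0 (pos t y)" using c ltM by simp
        then show False using that lowN \<open>\<not> N \<le> y\<close> by simp
      qed
    qed
    then show ?thesis unfolding N_def .
  qed
  define \<rho> where "\<rho> = map c0 [Ls..<max M Ls]"
  show "\<exists>\<rho>. basic_open (\<sigma> @ \<rho>) \<inter> QA A = {}"
  proof (intro exI[of _ \<rho>] equals0I)
    fix c assume cin: "c \<in> basic_open (\<sigma> @ \<rho>) \<inter> QA A"
    have agr: "c p = c0 p" if "p < M" for p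
    proof -
      have lenr: "length (\<sigma> @ \<rho>) = max M Ls" unfolding \<rho>_def Ls_def by simp
      have bo: "\<forall>i<length (\<sigma> @ \<rho>). c i = (\<sigma> @ \<rho>) ! i" using cin unfolding basic_open_def by blast
      have "p < length (\<sigma> @ \<rho>)" using that lenr by simp
      then have "c p = (\<sigma> @ \<rho>) ! p" using bo by blast
      also have "\<dots> = c0 p"
      proof (cases "p < Ls")
        case True then show ?thesis unfolding c0_def mk_def Ls_def by (simp add: nth_append)
      next
        case False then show ?thesis using that unfolding \<rho>_def Ls_def by (simp add: nth_append)
      qed
      finally show ?thesis .
    qed
    from cin obtain s where s: "length s = Suc n" "xx c s \<in> S_set A" unfolding QA_def by blast
    then obtain t i where ti: "s = t @ [i]" by (metis length_Suc_conv_rev)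
    have lt: "length t = n" using s ti by simp
    have agrA: "\<forall>p<M. c p = c0 p" using agr by blast
    have "\<forall>t'::bool list. length t' < length s \<longrightarrow> Nv c t' = Nv c0 t'"
    proof (intro allI impI)
      fix t' :: "bool list" assume "length t' < length s"
      then have "length t' \<le> n" using s(1) by simp
      then show "Nv c t' = Nv c0 t'" by (rule cont[OF agrA])
    qed
    then have "xx c s = xx c0 s" by (rule xx_cong)
    then show False using lvl[OF lt, of i] s ti by simp
  qed
qed

lemma nd_empty: "nowhere_dense_cantor {}"
  unfolding nowhere_dense_cantor_def by simp

lemma meager_QA:
  assumes "finite AA" "\<forall>A\<in>AA. infinite A" "Y \<subseteq> (\<Union>A\<in>AA. QA A)"
  shows "meager_cantor Y"
proof -
  obtain xs where xs: "set xs = AA" using finite_list[OF assms(1)] by blast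
  define N where "N n = (if n < length xs then QA (xs ! n) else {})" for n
  have "nowhere_dense_cantor (N n)" for n
    using kill assms(2) xs nd_empty unfolding N_def by (auto simp: nth_mem)
  moreover have "Y \<subseteq> (\<Union>n. N n)"
  proof
    fix c assume "c \<in> Y"
    then obtain A where A: "A \<in> AA" "c \<in> QA A" using assms(3) by blast
    then obtain n where "n < length xs" "xs ! n = A" using xs by (metis in_set_conv_nth)
    then show "c \<in> (\<Union>n. N n)" using A unfolding N_def by auto
  qed
  ultimately show ?thesis unfolding meager_cantor_def by blast
qed

lemma inf_QA:
  assumes "infinite (XX c \<inter> S_set A)"
  shows "c \<in> QA A"
  unfolding QA_def
proof (intro CollectI allI)
  fix n
  have fin: "finite (xx c ` {s. length s \<le> n})"
    using finite_lists_length_le[of "UNIV :: bool set" n] by simp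
  have "\<not> XX c \<inter> S_set A \<subseteq> xx c ` {s. length s \<le> n}"
    using assms fin finite_subset by blast
  then obtain x where x: "x \<in> XX c" "x \<in> S_set A" "x \<notin> xx c ` {s. length s \<le> n}" by blast
  then obtain s where "x = xx c s" unfolding XX_def by blast
  then have s: "xx c s \<in> S_set A" "n < length s" using x by auto
  obtain r where "xx c (take n s @ drop n s) = xx c (take n s) @ r" using xx_append by blast
  then have "xx c (take n s) \<in> S_set A" using s(1) S_set_prefix by simp
  moreover have "length (take n s) = n" using s(2) by simp
  ultimately show "\<exists>s. length s = n \<and> xx c s \<in> S_set A" by blast
qed

lemma meager_hit:
  assumes "F \<in> Spl"
  shows "meager_cantor {c. infinite (XX c \<inter> F)}"
proof -
  obtain AA where AA: "finite AA" "\<forall>A\<in>AA. infinite A" "F \<subseteq> (\<Union>A\<in>AA. S_set A)"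
    using assms unfolding Spl_def by blast
  have "{c. infinite (XX c \<inter> F)} \<subseteq> (\<Union>A\<in>AA. QA A)"
  proof
    fix c assume "c \<in> {c. infinite (XX c \<inter> F)}"
    then have inf: "infinite (XX c \<inter> F)" by simp
    have "XX c \<inter> F \<subseteq> (\<Union>A\<in>AA. XX c \<inter> S_set A)" using AA(3) by blast
    then have "\<exists>A\<in>AA. infinite (XX c \<inter> S_set A)"
      using inf AA(1) finite_subset by (metis finite_UN)
    then show "c \<in> (\<Union>A\<in>AA. QA A)" using inf_QA by blast
  qed
  then show ?thesis using meager_QA AA(1,2) by blast
qed

lemma part1:
  assumes "cov_plus_family Spl FF"
  shows "\<exists>G. cov_M_family G \<and> (card_of G, card_of FF) \<in> ordLeq"
proof -
  define G where "G = (\<lambda>F. {c. infinite (XX c \<inter> F)}) ` FF"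
  have "\<forall>Y\<in>G. meager_cantor Y" using assms meager_hit unfolding G_def cov_plus_family_def by blast
  moreover have "\<Union>G = UNIV"
  proof (rule set_eqI)
    fix c
    obtain F where "F \<in> FF" "infinite (XX c \<inter> F)"
      using assms XX_pos unfolding cov_plus_family_def by blast
    then show "c \<in> \<Union>G \<longleftrightarrow> c \<in> UNIV" unfolding G_def by blast
  qed
  ultimately have "cov_M_family G" unfolding cov_M_family_def by blast
  moreover have "(card_of G, card_of FF) \<in> ordLeq" unfolding G_def by (rule card_of_image)
  ultimately show ?thesis by blast
qed


theorem mainTheorem13:
  shows "(\<forall>\<F>. cov_plus_family Spl \<F> \<longrightarrow>
            (\<exists>\<G>. cov_M_family \<G> \<and> (card_of \<G>, card_of \<F>) \<in> ordLeq)) \<and>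
         (\<forall>\<R>. reaping_family \<R> \<longrightarrow>
            (\<exists>\<F>. cov_plus_family Spl \<F> \<and> (card_of \<F>, card_of \<R>) \<in> ordLeq))"
  using part1 part2 by blast

end
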